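(* Let $A\subseteq2^{\mathbb N}$ be analytic and non-Borel. Let $\phi$ be any $\mathbf\Pi^1_1$-rank on $\mathcal L^A_{\mathbf f}$ and $\psi$ any $\mathbf\Pi^1_1$-rank on $\mathcal L^A_{\mathbf f,0}$. Then there is no map $\Phi:\omega_1\to\omega_1$ such that $\psi(L)\le\Phi(\phi(L))$ for all $L\in\mathcal L^A_{\mathbf f,0}$.
   Context: Fix a bijection $h:2^{<\mathbb N}\to\mathbb N$ with $h(s)<h(t)$ whenever $|s|<|t|$ and let $s_n=h^{-1}(n)$. For $s\in2^{<\mathbb N}$ let $V_s=\{\sigma\in2^{\mathbb N}:s\sqsubset\sigma\}$, and let $f_n=\chi_{V_{s_n}}$. $[\mathbb N]$ is the set of infinite subsets of $\mathbb N$ (Polish subspace of $2^{\mathbb N}$). Define $\mathcal L^A_{\mathbf f}=\{L\in[\mathbb N]:(f_n|_A)_{n\in L}\text{ converges pointwise on }A\}$ and $\mathcal L^A_{\mathbf f,0}=\{L\in[\mathbb N]:(f_n|_A)_{n\in L}\text{ converges pointwise to }0\text{ on }A\}$; both are $\mathbf\Pi^1_1$. For a $\mathbf\Pi^1_1$ set $B$ in a Polish space, $\phi:B\to\omega_1$ is a $\mathbf\Pi^1_1$-rank if there are relations $\le_\Sigma\in\mathbf\Sigma^1_1$, $\le_\Pi\in\mathbf\Pi^1_1$ such that for all $y\in B$ and all $x$: $(x\in B\wedge\phi(x)\le\phi(y))\iff x\le_\Sigma y\iff x\le_\Pi y$. *)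

theory Defs
  imports "HOL-Analysis.Analysis" "HOL-Library.Infinite_Set"
begin

definition cantor_top :: "(nat \<Rightarrow> bool) topology" where
  "cantor_top = product_topology (\<lambda>_. discrete_topology UNIV) UNIV"

definition baire_top :: "(nat \<Rightarrow> nat) topology" where
  "baire_top = product_topology (\<lambda>_. discrete_topology UNIV) UNIV"

definition cantor_borel :: "(nat \<Rightarrow> bool) set set" where
  "cantor_borel = sigma_sets UNIV {U. openin cantor_top U}"

definition analytic_in :: "'a topology \<Rightarrow> 'a set \<Rightarrow> bool" where
  "analytic_in X S \<longleftrightarrow> S \<subseteq> topspace X \<and>
     (S = {} \<or> (\<exists>g. continuous_map baire_top X g \<and> g ` UNIV = S))"

definition coanalytic_in :: "'a topology \<Rightarrow> 'a set \<Rightarrow> bool" where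
  "coanalytic_in X S \<longleftrightarrow> S \<subseteq> topspace X \<and> analytic_in X (topspace X - S)"

text \<open>[N]: infinite subsets of N, as a subspace of Cantor space (L is identified with {n. L n}).\<close>
definition infsets_top :: "(nat \<Rightarrow> bool) topology" where
  "infsets_top = subtopology cantor_top {L. infinite {n. L n}}"

definition Vs :: "bool list \<Rightarrow> (nat \<Rightarrow> bool) set" where
  "Vs s = {\<sigma>. \<forall>i<length s. \<sigma> i = s ! i}"

definition fseq :: "(bool list \<Rightarrow> nat) \<Rightarrow> nat \<Rightarrow> (nat \<Rightarrow> bool) \<Rightarrow> real" where
  "fseq h n \<sigma> = indicator (Vs (inv h n)) \<sigma>"

text \<open>L^A_f and L^A_{f,0}: the subsequence (f_n)_{n in L} is indexed by the increasing enumeration of L.\<close>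
definition Lf :: "(bool list \<Rightarrow> nat) \<Rightarrow> (nat \<Rightarrow> bool) set \<Rightarrow> (nat \<Rightarrow> bool) set" where
  "Lf h A = {L. infinite {n. L n} \<and>
     (\<forall>\<sigma>\<in>A. convergent (\<lambda>k. fseq h (enumerate {n. L n} k) \<sigma>))}"

definition Lf0 :: "(bool list \<Rightarrow> nat) \<Rightarrow> (nat \<Rightarrow> bool) set \<Rightarrow> (nat \<Rightarrow> bool) set" where
  "Lf0 h A = {L. infinite {n. L n} \<and>
     (\<forall>\<sigma>\<in>A. (\<lambda>k. fseq h (enumerate {n. L n} k) \<sigma>) \<longlonglongrightarrow> 0)}"

definition pi11_rank :: "'a topology \<Rightarrow> 'a set \<Rightarrow> ('a \<Rightarrow> 'w::wellorder) \<Rightarrow> bool" where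
  "pi11_rank X B \<phi> \<longleftrightarrow>
     (\<exists>RS RP. analytic_in (prod_topology X X) RS \<and> coanalytic_in (prod_topology X X) RP \<and>
        (\<forall>y\<in>B. \<forall>x\<in>topspace X.
            ((x \<in> B \<and> \<phi> x \<le> \<phi> y) \<longleftrightarrow> (x, y) \<in> RS) \<and> ((x, y) \<in> RS \<longleftrightarrow> (x, y) \<in> RP)))"

end

theory Submission
  imports Defs
begin



abbreviation "DP \<equiv> product_topology (\<lambda>_. discrete_topology (UNIV::'a set)) (UNIV::nat set)"

lemma topspace_DP[simp]: "topspace (DP::(nat \<Rightarrow> 'a) topology) = UNIV"
  by (simp add: PiE_UNIV_domain)

lemma open_basic:
  fixes S :: "(nat \<Rightarrow> 'a) set"
  assumes "\<forall>x\<in>S. \<exists>m. \<forall>y. (\<forall>i<m. y i = x i) \<longrightarrow> y \<in> S"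
  shows "openin (DP::(nat \<Rightarrow> 'a) topology) S"
  unfolding openin_product_topology_alt
proof
  fix x assume "x \<in> S"
  then obtain m where m: "\<forall>y. (\<forall>i<m. y i = x i) \<longrightarrow> y \<in> S" using assms by blast
  define U where "U = (\<lambda>i. if i < m then {x i} else (UNIV::'a set))"
  have "finite {i \<in> UNIV. U i \<noteq> topspace (discrete_topology UNIV)}"
    by (rule finite_subset[of _ "{..<m}"]) (auto simp: U_def)
  moreover have "x \<in> Pi\<^sub>E UNIV U" by (auto simp: U_def)
  moreover have "Pi\<^sub>E UNIV U \<subseteq> S" using m by (auto simp: U_def PiE_def Pi_def split: if_splits)
  ultimately show "\<exists>U. finite {i \<in> UNIV. U i \<noteq> topspace (discrete_topology UNIV)} \<and>
             (\<forall>i\<in>UNIV. openin (discrete_topology UNIV) (U i)) \<and> x \<in> Pi\<^sub>E UNIV U \<and> Pi\<^sub>E UNIV U \<subseteq> S"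
    by auto
qed

lemma nbhd:
  fixes S :: "(nat \<Rightarrow> 'a) set"
  assumes "openin (DP::(nat \<Rightarrow> 'a) topology) S" "x \<in> S"
  shows "\<exists>m. \<forall>y. (\<forall>i<m. y i = x i) \<longrightarrow> y \<in> S"
proof -
  obtain U where U: "finite {i \<in> UNIV. U i \<noteq> topspace (discrete_topology (UNIV::'a set))}"
     "x \<in> Pi\<^sub>E UNIV U" "Pi\<^sub>E UNIV U \<subseteq> S"
    using assms unfolding openin_product_topology_alt by blast
  then obtain m where m: "{i. U i \<noteq> UNIV} \<subseteq> {..<m}"
    using finite_nat_iff_bounded by auto
  show ?thesis
  proof (intro exI allI impI)
    fix y assume y: "\<forall>i<m. y i = x i"
    have "y \<in> Pi\<^sub>E UNIV U"
    proof -
      have "y i \<in> U i" for i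
        using y m U(2) by (cases "i < m") (auto simp: PiE_def Pi_def)
      then show ?thesis by (auto simp: PiE_def Pi_def)
    qed
    then show "y \<in> S" using U(3) by blast
  qed
qed

definition loc :: "((nat \<Rightarrow> 'a) \<Rightarrow> 'b) \<Rightarrow> bool" where
  "loc f \<longleftrightarrow> (\<forall>x. \<exists>m. \<forall>y. (\<forall>i<m. y i = x i) \<longrightarrow> f y = f x)"

lemma loc_cont:
  fixes f :: "(nat \<Rightarrow> 'a) \<Rightarrow> 'b"
  assumes "loc f"
  shows "continuous_map (DP::(nat \<Rightarrow> 'a) topology) (discrete_topology UNIV) f"
  unfolding continuous_map_def
proof (intro conjI allI impI)
  fix U :: "'b set" assume "openin (discrete_topology UNIV) U"
  show "openin DP {x \<in> topspace DP. f x \<in> U}"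
  proof (rule open_basic, rule ballI)
    fix x assume x: "x \<in> {x \<in> topspace DP. f x \<in> U}"
    obtain m where m: "\<forall>y. (\<forall>i<m. y i = x i) \<longrightarrow> f y = f x"
      using spec[OF assms[unfolded loc_def], of x] by (elim exE)
    show "\<exists>m. \<forall>y. (\<forall>i<m. y i = x i) \<longrightarrow> y \<in> {x \<in> topspace DP. f x \<in> U}"
    proof (intro exI[of _ m] allI impI)
      fix y assume "\<forall>i<m. y i = x i"
      then have "f y = f x" using m by blast
      then show "y \<in> {x \<in> topspace DP. f x \<in> U}" using x by simp
    qed
  qed
qed simp

lemma loc_cont_prod:
  assumes "\<And>n. loc (\<lambda>x. f x n)"
  shows "continuous_map (DP::(nat \<Rightarrow> 'a) topology) (DP::(nat \<Rightarrow> 'b) topology) f"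
  unfolding continuous_map_componentwise_UNIV using assms loc_cont by blast

lemma cont_loc:
  assumes "continuous_map (DP::(nat \<Rightarrow> 'a) topology) (discrete_topology UNIV) f"
  shows "loc f"
  unfolding loc_def
proof
  fix x
  have "\<forall>U. openin DP {y. f y \<in> U}" using assms unfolding continuous_map_def by simp
  then have "openin DP {y. f y \<in> {f x}}" by blast
  then have "openin DP {y. f y = f x}" by simp
  then show "\<exists>m. \<forall>y. (\<forall>i<m. y i = x i) \<longrightarrow> f y = f x"
    using nbhd[of "{y. f y = f x}" x] \<open>openin DP {y. f y = f x}\<close> by auto
qed

lemma cont_loc_prod:
  assumes "continuous_map (DP::(nat \<Rightarrow> 'a) topology) (DP::(nat \<Rightarrow> 'b) topology) f"
  shows "loc (\<lambda>x. f x n)"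
  using assms unfolding continuous_map_componentwise_UNIV by (blast intro: cont_loc)



lemma closed_out:
  fixes F :: "(nat \<Rightarrow> 'a) set"
  assumes "closedin (DP::(nat \<Rightarrow> 'a) topology) F" "x \<notin> F"
  shows "\<exists>m. \<forall>y. (\<forall>i<m. y i = x i) \<longrightarrow> y \<notin> F"
proof -
  have "openin DP (UNIV - F)" using assms(1) unfolding closedin_def by simp
  then show ?thesis using nbhd[of "UNIV - F" x] assms(2) by auto
qed

lemma retract:
  fixes F :: "(nat \<Rightarrow> nat) set"
  assumes cl: "closedin baire_top F" and ne: "F \<noteq> {}"
  shows "\<exists>r. continuous_map baire_top baire_top r \<and> range r = F"
proof -
  define P where "P k x \<longleftrightarrow> (\<exists>z\<in>F. \<forall>i<k. z i = x i)" for k and x :: "nat \<Rightarrow> nat"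
  define c where "c k x = (SOME z. z \<in> F \<and> (\<forall>i<k. z i = x i))" for k and x :: "nat \<Rightarrow> nat"
  define kk where "kk x = (LEAST k. \<not> P k x)" for x
  define r where "r x = (if x \<in> F then x else c (kk x - 1) x)" for x
  have P0: "P 0 x" for x using ne unfolding P_def by auto
  have Pmono: "P j x" if "P k x" "j \<le> k" for j k x using that unfolding P_def by (meson less_le_trans)
  have Pdep: "P j y = P j x" if "\<forall>i<j. y i = x i" for j x y using that unfolding P_def by auto
  have cdep: "c j y = c j x" if "\<forall>i<j. y i = x i" for j x y
  proof -
    have "(\<lambda>z. z \<in> F \<and> (\<forall>i<j. z i = y i)) = (\<lambda>z. z \<in> F \<and> (\<forall>i<j. z i = x i))"
      using that by auto
    then show ?thesis unfolding c_def by simp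
  qed
  have cF: "c k x \<in> F \<and> (\<forall>i<k. c k x i = x i)" if "P k x" for k x
  proof -
    from that obtain z where "z \<in> F \<and> (\<forall>i<k. z i = x i)" unfolding P_def by blast
    then show ?thesis unfolding c_def by (rule someI[where P="\<lambda>z. z \<in> F \<and> (\<forall>i<k. z i = x i)"])
  qed
  have exk: "\<exists>k. \<not> P k x" if nF: "x \<notin> F" for x
  proof -
    obtain m where m: "\<forall>y. (\<forall>i<m. y i = x i) \<longrightarrow> y \<notin> F"
      using closed_out[of F x, OF cl[unfolded baire_top_def] nF] by (elim exE)
    then have "\<not> P m x" unfolding P_def by auto
    then show ?thesis by blast
  qed
  have kk1: "\<not> P (kk x) x" "\<forall>j<kk x. P j x" "kk x \<ge> 1" if "x \<notin> F" for x
  proof -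
    show "\<not> P (kk x) x" unfolding kk_def by (rule LeastI_ex[OF exk[OF that]])
    show "\<forall>j<kk x. P j x"
    proof (intro allI impI)
      fix j assume "j < kk x" then show "P j x" unfolding kk_def using not_less_Least[of j "\<lambda>k. \<not> P k x"] by blast
    qed
    show "kk x \<ge> 1" using \<open>\<not> P (kk x) x\<close> P0[of x] by (cases "kk x") auto
  qed
  have rF: "r x \<in> F" for x
  proof (cases "x \<in> F")
    case False
    then have "P (kk x - 1) x" using kk1(2)[OF False] kk1(3)[OF False] by simp
    then show ?thesis unfolding r_def using False cF by simp
  qed (simp add: r_def)
  have "range r = F"
  proof
    show "range r \<subseteq> F" using rF by auto
    show "F \<subseteq> range r"
    proof
      fix x assume "x \<in> F"
      then have "r x = x" by (simp add: r_def)
      then show "x \<in> range r" using rangeI[of r x] by simp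
    qed
  qed
  moreover have "loc (\<lambda>x. r x n)" for n
    unfolding loc_def
  proof
    fix x
    show "\<exists>m. \<forall>y. (\<forall>i<m. y i = x i) \<longrightarrow> r y n = r x n"
    proof (cases "x \<in> F")
      case True
      show ?thesis
      proof (intro exI allI impI)
        fix y assume y: "\<forall>i<Suc n. y i = x i"
        show "r y n = r x n"
        proof (cases "y \<in> F")
          case True then show ?thesis using y \<open>x \<in> F\<close> by (simp add: r_def)
        next
          case False
          have Py: "P j y" if "j \<le> Suc n" for j
          proof -
            have "P j x" unfolding P_def using \<open>x \<in> F\<close> by auto
            moreover have "\<forall>i<j. y i = x i" using y that by auto
            ultimately show ?thesis using Pdep by blast
          qed
          have "kk y > Suc n" using kk1(1)[OF False] Py by (metis not_le)
          then have "P (kk y - 1) y" "n < kk y - 1" using kk1(2)[OF False] by auto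
          then have "r y n = y n" unfolding r_def using False cF by auto
          then show ?thesis using y \<open>x \<in> F\<close> by (simp add: r_def)
        qed
      qed
    next
      case False
      show ?thesis
      proof (intro exI allI impI)
        fix y assume y: "\<forall>i<kk x. y i = x i"
        have Pyx: "P j y = P j x" if "j \<le> kk x" for j
          using Pdep[of j y x] y that by auto
        have "y \<notin> F"
        proof
          assume "y \<in> F" then have "P (kk x) y" unfolding P_def using y by auto
          then show False using Pyx kk1(1)[OF False] by auto
        qed
        have "kk y = kk x"
        proof -
          have "\<not> P (kk x) y" using Pyx kk1(1)[OF False] by auto
          moreover have "\<forall>j<kk x. P j y" using Pyx kk1(2)[OF False] by auto
          ultimately show ?thesis unfolding kk_def
            by (metis (mono_tags, lifting) Least_equality not_le)
        qed
        then have "r y = c (kk x - 1) y" unfolding r_def using \<open>y \<notin> F\<close> by simp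
        also have "\<dots> = c (kk x - 1) x" using cdep[of "kk x - 1" y x] y by auto
        finally show "r y n = r x n" unfolding r_def using False by simp
      qed
    qed
  qed
  then have "continuous_map baire_top baire_top r"
    unfolding baire_top_def by (intro loc_cont_prod) 
  ultimately show ?thesis by blast
qed


lemma loc_single: "loc (\<lambda>x. g (x k))"
  unfolding loc_def by (metis lessI)

lemma loc_single': "loc (\<lambda>x. x k)"
  using loc_single[of id k] by simp

lemma proj_analytic:
  fixes F :: "((nat \<Rightarrow> bool) \<times> (nat \<Rightarrow> nat)) set"
  assumes cl: "closedin (prod_topology cantor_top baire_top) F"
  shows "analytic_in cantor_top (fst ` F)"
proof (cases "F = {}")
  case True then show ?thesis by (simp add: analytic_in_def)
next
  case False
  define d where "d w = ((\<lambda>n. w (2*n) \<noteq> 0), (\<lambda>n. w (2*n+1)))" for w :: "nat \<Rightarrow> nat"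
  have c1: "continuous_map baire_top cantor_top (\<lambda>w. fst (d w))"
    unfolding baire_top_def cantor_top_def d_def
    by (intro loc_cont_prod) (simp add: loc_single loc_single')
  have c2: "continuous_map baire_top baire_top (\<lambda>w. snd (d w))"
    unfolding baire_top_def cantor_top_def d_def
    by (intro loc_cont_prod) (simp add: loc_single loc_single')
  have cd: "continuous_map baire_top (prod_topology cantor_top baire_top) d"
    using c1 c2 by (simp add: continuous_map_pairwise o_def)
  define F' where "F' = {w \<in> topspace baire_top. d w \<in> F}"
  have clF': "closedin baire_top F'"
    unfolding F'_def using closedin_continuous_map_preimage[OF cd cl] .
  have dsurj: "\<exists>w. d w = p" for p
  proof -
    obtain \<sigma> z where p: "p = (\<sigma>, z)" by fastforce
    define w where "w n = (if even n then (if \<sigma> (n div 2) then 1 else 0) else z (n div 2))" for n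
    have "d w = p" unfolding p d_def w_def by auto
    then show ?thesis by blast
  qed
  have tb: "topspace baire_top = UNIV" by (simp add: baire_top_def)
  have dF: "d ` F' = F"
  proof
    show "d ` F' \<subseteq> F" unfolding F'_def by auto
    show "F \<subseteq> d ` F'"
    proof
      fix p assume "p \<in> F"
      obtain w where "d w = p" using dsurj by blast
      then show "p \<in> d ` F'" unfolding F'_def tb using \<open>p \<in> F\<close> by auto
    qed
  qed
  then have ne: "F' \<noteq> {}" using False by auto
  obtain r where r: "continuous_map baire_top baire_top r" "range r = F'"
    using retract[OF clF' ne] by (elim exE conjE)
  have "continuous_map baire_top cantor_top (fst \<circ> (d \<circ> r))"
    by (rule continuous_map_compose[OF continuous_map_compose[OF r(1) cd] continuous_map_fst])
  moreover have "(fst \<circ> (d \<circ> r)) ` UNIV = fst ` F"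
  proof -
    have "(fst \<circ> (d \<circ> r)) ` UNIV = fst ` (d ` range r)" by (simp add: image_image)
    also have "\<dots> = fst ` F" using r(2) dF by simp
    finally show ?thesis .
  qed
  moreover have "topspace cantor_top = UNIV" by (simp add: cantor_top_def)
  ultimately show ?thesis unfolding analytic_in_def by (intro conjI disjI2 exI[of _ "fst \<circ> (d \<circ> r)"]) auto
qed





definition sep :: "(nat \<Rightarrow> bool) set \<Rightarrow> (nat \<Rightarrow> bool) set \<Rightarrow> bool" where
  "sep P Q \<longleftrightarrow> (\<exists>C\<in>cantor_borel. P \<subseteq> C \<and> C \<inter> Q = {})"

lemma sepI: "C \<in> cantor_borel \<Longrightarrow> P \<subseteq> C \<Longrightarrow> C \<inter> Q = {} \<Longrightarrow> sep P Q"
  unfolding sep_def by blast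

lemma sep_union:
  assumes "\<And>i::nat. sep (P i) Q" shows "sep (\<Union>i. P i) Q"
proof -
  obtain C where C: "\<And>i. C i \<in> cantor_borel \<and> P i \<subseteq> C i \<and> C i \<inter> Q = {}"
  proof -
    have "\<forall>i. \<exists>C. C \<in> cantor_borel \<and> P i \<subseteq> C \<and> C \<inter> Q = {}" using assms unfolding sep_def by blast
    then show ?thesis using that by (metis (no_types))
  qed
  have Ci: "\<And>i. C i \<in> sigma_sets UNIV {U. openin cantor_top U}" using C unfolding cantor_borel_def by blast
  have B: "(\<Union>i. C i) \<in> cantor_borel" unfolding cantor_borel_def by (rule sigma_sets.Union[OF Ci])
  show ?thesis unfolding sep_def
  proof (intro bexI[of _ "\<Union>i. C i"] conjI)
    show "(\<Union>i. P i) \<subseteq> (\<Union>i. C i)" using C by blast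
    show "(\<Union>i. C i) \<inter> Q = {}" using C by blast
  qed (rule B)
qed

lemma sep_inter:
  assumes "\<And>j::nat. sep P (Q j)" shows "sep P (\<Union>j. Q j)"
proof -
  obtain C where C: "\<And>j. C j \<in> cantor_borel \<and> P \<subseteq> C j \<and> C j \<inter> Q j = {}"
  proof -
    have "\<forall>j. \<exists>C. C \<in> cantor_borel \<and> P \<subseteq> C \<and> C \<inter> Q j = {}" using assms unfolding sep_def by blast
    then show ?thesis using that by (metis (no_types))
  qed
  have Cj: "\<And>j. C j \<in> sigma_sets UNIV {U. openin cantor_top U}" using C unfolding cantor_borel_def by blast
  have sub: "{U. openin cantor_top U} \<subseteq> Pow UNIV" by simp
  have B: "(\<Inter>j. C j) \<in> cantor_borel" unfolding cantor_borel_def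
    by (rule sigma_sets_Inter[OF sub Cj])
  show ?thesis unfolding sep_def
  proof (intro bexI[of _ "\<Inter>j. C j"] conjI)
    show "P \<subseteq> (\<Inter>j. C j)" using C by blast
    show "(\<Inter>j. C j) \<inter> (\<Union>j. Q j) = {}" using C by blast
  qed (rule B)
qed

lemma coord_borel: "{\<sigma>. \<sigma> n = b} \<in> cantor_borel"
proof -
  have "openin cantor_top {\<sigma>. \<sigma> n = b}"
    unfolding cantor_top_def
  proof (rule open_basic, rule ballI)
    fix x :: "nat \<Rightarrow> bool" assume "x \<in> {\<sigma>. \<sigma> n = b}"
    then show "\<exists>m. \<forall>y. (\<forall>i<m. y i = x i) \<longrightarrow> y \<in> {\<sigma>. \<sigma> n = b}"
      by (intro exI[of _ "Suc n"]) simp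
  qed
  then show ?thesis unfolding cantor_borel_def by (rule sigma_sets.Basic[OF CollectI])
qed

definition Nb :: "nat list \<Rightarrow> (nat \<Rightarrow> nat) set" where
  "Nb s = {z. \<forall>i<length s. z i = s ! i}"

lemma Nb_split: "Nb s = (\<Union>i. Nb (s @ [i]))"
proof
  show "Nb s \<subseteq> (\<Union>i. Nb (s @ [i]))"
  proof
    fix z assume "z \<in> Nb s"
    then have "z \<in> Nb (s @ [z (length s)])"
      unfolding Nb_def by (auto simp: nth_append less_Suc_eq)
    then show "z \<in> (\<Union>i. Nb (s @ [i]))" by blast
  qed
  show "(\<Union>i. Nb (s @ [i])) \<subseteq> Nb s" unfolding Nb_def by (auto simp: nth_append)
qed

lemma sep_step:
  assumes "\<not> sep (g ` Nb s) (g' ` Nb t)"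
  shows "\<exists>i j. \<not> sep (g ` Nb (s @ [i])) (g' ` Nb (t @ [j]))"
proof (rule ccontr)
  assume na: "\<not> ?thesis"
  have "sep (g ` Nb (s @ [i])) (\<Union>j. g' ` Nb (t @ [j]))" for i
  proof (rule sep_inter)
    fix j show "sep (g ` Nb (s @ [i])) (g' ` Nb (t @ [j]))" using na by blast
  qed
  then have "sep (\<Union>i. g ` Nb (s @ [i])) (\<Union>j. g' ` Nb (t @ [j]))"
    by (rule sep_union)
  moreover have "(\<Union>i. g ` Nb (s @ [i])) = g ` Nb s"
  proof -
    have "g ` Nb s = g ` (\<Union>i. Nb (s @ [i]))" using Nb_split[of s] by (rule arg_cong)
    then show ?thesis by (simp add: image_UN)
  qed
  moreover have "(\<Union>j. g' ` Nb (t @ [j])) = g' ` Nb t"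
  proof -
    have "g' ` Nb t = g' ` (\<Union>i. Nb (t @ [i]))" using Nb_split[of t] by (rule arg_cong)
    then show ?thesis by (simp add: image_UN)
  qed
  ultimately show False using assms by simp
qed

lemma lusin:
  assumes g: "continuous_map baire_top cantor_top g" and g': "continuous_map baire_top cantor_top g'"
    and disj: "range g \<inter> range g' = {}"
  shows "sep (range g) (range g')"
proof (rule ccontr)
  assume bad0: "\<not> sep (range g) (range g')"
  define bad where "bad p \<longleftrightarrow> \<not> sep (g ` Nb (fst p)) (g' ` Nb (snd p))" for p
  define nxt where "nxt p = (SOME q. \<exists>i j. q = (fst p @ [i], snd p @ [j]) \<and> bad q)" for p
  define st where "st k = (nxt ^^ k) ([], [])" for k
  have nxt: "\<exists>i j. nxt p = (fst p @ [i], snd p @ [j]) \<and> bad (nxt p)" if "bad p" for p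
  proof -
    have "\<exists>q. \<exists>i j. q = (fst p @ [i], snd p @ [j]) \<and> bad q"
      using sep_step[of g "fst p" g' "snd p"] that unfolding bad_def by auto
    then show ?thesis unfolding nxt_def by (rule someI_ex)
  qed
  have inv: "bad (st k) \<and> length (fst (st k)) = k \<and> length (snd (st k)) = k" for k
  proof (induction k)
    case 0
    have "Nb [] = UNIV" by (simp add: Nb_def)
    then show ?case using bad0 by (simp add: st_def bad_def)
  next
    case (Suc k)
    then obtain i j where "nxt (st k) = (fst (st k) @ [i], snd (st k) @ [j])" "bad (nxt (st k))"
      using nxt by blast
    then show ?case using Suc by (simp add: st_def)
  qed
  have stS: "\<exists>i j. st (Suc k) = (fst (st k) @ [i], snd (st k) @ [j])" for k
    using nxt[of "st k"] inv[of k] by (auto simp: st_def)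
  define x where "x k = fst (st (Suc k)) ! k" for k
  define y where "y k = snd (st (Suc k)) ! k" for k
  have stx: "fst (st k) = map x [0..<k] \<and> snd (st k) = map y [0..<k]" for k
  proof (induction k)
    case 0 then show ?case by (simp add: st_def)
  next
    case (Suc k)
    obtain i j where e: "st (Suc k) = (fst (st k) @ [i], snd (st k) @ [j])" using stS by blast
    have "x k = i" "y k = j" unfolding x_def y_def using e inv[of k] by (auto simp: nth_append)
    then show ?case using Suc e by simp
  qed
  have Nbx: "Nb (fst (st k)) = {z. \<forall>i<k. z i = x i}" "Nb (snd (st k)) = {z. \<forall>i<k. z i = y i}" for k
    using stx[of k] by (auto simp: Nb_def)
  have "g x \<noteq> g' y" using disj by auto
  then obtain n where n: "g x n \<noteq> g' y n" by blast
  have l1: "loc (\<lambda>z. g z n)" using cont_loc_prod g unfolding baire_top_def cantor_top_def by blast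
  have l2: "loc (\<lambda>z. g' z n)" using cont_loc_prod g' unfolding baire_top_def cantor_top_def by blast
  obtain m1 where m1: "\<forall>z. (\<forall>i<m1. z i = x i) \<longrightarrow> g z n = g x n"
    using spec[OF l1[unfolded loc_def], of x] by (elim exE)
  obtain m2 where m2: "\<forall>z. (\<forall>i<m2. z i = y i) \<longrightarrow> g' z n = g' y n"
    using spec[OF l2[unfolded loc_def], of y] by (elim exE)
  define m where "m = max m1 m2"
  have C1: "g ` Nb (fst (st m)) \<subseteq> {\<sigma>. \<sigma> n = g x n}"
  proof
    fix a assume "a \<in> g ` Nb (fst (st m))"
    then obtain z where z: "z \<in> Nb (fst (st m))" "a = g z" by blast
    then have "\<forall>i<m1. z i = x i" unfolding Nbx m_def by simp
    then have "g z n = g x n" using m1 by blast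
    then show "a \<in> {\<sigma>. \<sigma> n = g x n}" using z by simp
  qed
  have C2: "{\<sigma>. \<sigma> n = g x n} \<inter> g' ` Nb (snd (st m)) = {}"
  proof -
    have "a \<noteq> g x n" if "a \<in> (\<lambda>z. z n) ` g' ` Nb (snd (st m))" for a
    proof -
      from that obtain z where z: "z \<in> Nb (snd (st m))" "a = g' z n" by blast
      then have "\<forall>i<m2. z i = y i" unfolding Nbx m_def by simp
      then have "g' z n = g' y n" using m2 by blast
      then show ?thesis using z n by simp
    qed
    then show ?thesis by blast
  qed
  have "sep (g ` Nb (fst (st m))) (g' ` Nb (snd (st m)))"
    by (rule sepI[OF coord_borel C1 C2])
  then show False using inv[of m] unfolding bad_def by simp
qed

lemma suslin:
  assumes "analytic_in cantor_top A" "analytic_in cantor_top (UNIV - A)"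
  shows "A \<in> cantor_borel"
proof -
  consider "A = {}" | "UNIV - A = {}" | g g' where "continuous_map baire_top cantor_top g"
      "range g = A" "continuous_map baire_top cantor_top g'" "range g' = UNIV - A"
    using assms unfolding analytic_in_def by blast
  then show ?thesis
  proof cases
    case 1 then show ?thesis unfolding cantor_borel_def by (simp add: sigma_sets.Empty)
  next
    case 2 then have "A = UNIV" by auto
    then show ?thesis unfolding cantor_borel_def by (simp add: sigma_sets_top)
  next
    case 3
    then have "sep A (UNIV - A)" using lusin[of g g'] by auto
    then obtain C where "C \<in> cantor_borel" "A \<subseteq> C" "C \<inter> (UNIV - A) = {}" unfolding sep_def by blast
    then have "C = A" by auto
    then show ?thesis using \<open>C \<in> cantor_borel\<close> by simp
  qed
qed




definition pre :: "(nat \<Rightarrow> bool) \<Rightarrow> nat \<Rightarrow> bool list" where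
  "pre \<sigma> k = map \<sigma> [0..<k]"

definition uu :: "(nat \<Rightarrow> bool) \<Rightarrow> nat \<Rightarrow> bool list" where
  "uu \<sigma> j = (if even j then pre \<sigma> j else pre \<sigma> (j - 1) @ [\<not> \<sigma> (j - 1)])"

definition Lm :: "(bool list \<Rightarrow> nat) \<Rightarrow> (nat \<Rightarrow> bool) \<Rightarrow> nat \<Rightarrow> bool" where
  "Lm h \<sigma> = (\<lambda>n. \<exists>k. n = h (pre \<sigma> k))"

definition Mm :: "(bool list \<Rightarrow> nat) \<Rightarrow> (nat \<Rightarrow> bool) \<Rightarrow> nat \<Rightarrow> bool" where
  "Mm h \<sigma> = (\<lambda>n. \<exists>j. n = h (uu \<sigma> j))"

lemma len_pre[simp]: "length (pre \<sigma> k) = k" by (simp add: pre_def)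

lemma len_uu[simp]: "length (uu \<sigma> j) = j" by (simp add: uu_def)

lemma h_ge_len:
  assumes hl: "\<forall>s t. length s < length t \<longrightarrow> (h::bool list \<Rightarrow> nat) s < h t"
  shows "length s \<le> h s"
proof -
  have "\<forall>s. length s = n \<longrightarrow> n \<le> h s" for n
  proof (induction n)
    case (Suc n)
    show ?case
    proof (intro allI impI)
      fix s :: "bool list" assume s: "length s = Suc n"
      then have "length (butlast s) = n" by simp
      then have "n \<le> h (butlast s)" "h (butlast s) < h s" using Suc hl s by auto
      then show "Suc n \<le> h s" by simp
    qed
  qed simp
  then show ?thesis by blast
qed

lemma enum_range:
  fixes f :: "nat \<Rightarrow> nat"
  assumes "strict_mono f"
  shows "enumerate (range f) n = f n"
proof (induction n)
  case 0
  show ?case unfolding enumerate_0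
  proof (rule Least_equality)
    show "f 0 \<in> range f" by simp
    show "\<And>y. y \<in> range f \<Longrightarrow> f 0 \<le> y" using assms by (auto simp: strict_mono_less_eq)
  qed
next
  case (Suc n)
  have inf: "infinite (range f)" using assms strict_mono_imp_inj_on range_inj_infinite by blast
  show ?case unfolding enumerate_Suc''[OF inf] Suc
  proof (rule Least_equality)
    show "f (Suc n) \<in> range f \<and> f n < f (Suc n)" using assms by (simp add: strict_mono_less)
    show "\<And>y. y \<in> range f \<and> f n < y \<Longrightarrow> f (Suc n) \<le> y"
    proof -
      fix y assume "y \<in> range f \<and> f n < y"
      then obtain k where "y = f k" "f n < f k" by blast
      then have "n < k" using assms by (simp add: strict_mono_less)
      then show "f (Suc n) \<le> y" using \<open>y = f k\<close> assms by (simp add: strict_mono_less_eq)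
    qed
  qed
qed

lemma seq_facts:
  fixes h :: "bool list \<Rightarrow> nat" and w :: "nat \<Rightarrow> bool list"
  assumes ih: "inj h" and hl: "\<forall>s t. length s < length t \<longrightarrow> h s < h t"
    and wl: "\<And>k. length (w k) = k"
  shows "infinite {n. \<exists>k. n = h (w k)}"
    and "fseq h (enumerate {n. \<exists>k. n = h (w k)} k) \<tau> = (if \<tau> \<in> Vs (w k) then 1 else 0)"
proof -
  have sm: "strict_mono (\<lambda>k. h (w k))" unfolding strict_mono_def using hl wl by simp
  have eq: "{n. \<exists>k. n = h (w k)} = range (\<lambda>k. h (w k))" by auto
  show "infinite {n. \<exists>k. n = h (w k)}" unfolding eq
    using sm strict_mono_imp_inj_on range_inj_infinite by blast
  have "enumerate {n. \<exists>k. n = h (w k)} k = h (w k)" unfolding eq using enum_range[OF sm] by simp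
  then show "fseq h (enumerate {n. \<exists>k. n = h (w k)} k) \<tau> = (if \<tau> \<in> Vs (w k) then 1 else 0)"
    unfolding fseq_def using ih by (simp add: indicator_def)
qed

lemma Vs_pre: "\<tau> \<in> Vs (pre \<sigma> k) \<longleftrightarrow> (\<forall>i<k. \<tau> i = \<sigma> i)"
  by (simp add: Vs_def pre_def)

lemma Vs_uu: "\<tau> \<in> Vs (uu \<sigma> j) \<longleftrightarrow>
   (if even j then (\<forall>i<j. \<tau> i = \<sigma> i) else (\<forall>i<j - 1. \<tau> i = \<sigma> i) \<and> \<tau> (j - 1) = (\<not> \<sigma> (j - 1)))"
proof (cases "even j")
  case True then show ?thesis by (simp add: uu_def Vs_pre)
next
  case False
  then have j: "j = Suc (j - 1)" by (cases j) auto
  have "\<tau> \<in> Vs (pre \<sigma> (j - 1) @ [\<not> \<sigma> (j - 1)]) \<longleftrightarrow>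
        (\<forall>i<j - 1. \<tau> i = \<sigma> i) \<and> \<tau> (j - 1) = (\<not> \<sigma> (j - 1))"
    unfolding Vs_def
    apply (subst j) 
    apply (auto simp: nth_append pre_def less_Suc_eq)
    done
  then show ?thesis using False by (simp add: uu_def)
qed




lemma tend0_diff:
  fixes \<tau> \<sigma> :: "nat \<Rightarrow> bool" and X :: "nat \<Rightarrow> real"
  assumes "\<tau> d \<noteq> \<sigma> d" and "\<And>k. k > Suc d \<Longrightarrow> X k = 0"
  shows "X \<longlonglongrightarrow> 0"
proof -
  have "eventually (\<lambda>k. X k = 0) sequentially"
    unfolding eventually_sequentially using assms(2) by (intro exI[of _ "Suc (Suc d)"]) auto
  then show ?thesis by (rule tendsto_eventually)
qed

lemma L_seq:
  assumes ih: "inj h" and hl: "\<forall>s t. length s < length t \<longrightarrow> h s < h t"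
  shows "fseq h (enumerate {n. Lm h \<sigma> n} k) \<tau> = (if \<forall>i<k. \<tau> i = \<sigma> i then 1 else 0)"
    and "infinite {n. Lm h \<sigma> n}"
proof -
  have e: "{n. Lm h \<sigma> n} = {n. \<exists>k. n = h (pre \<sigma> k)}" by (simp add: Lm_def)
  show "fseq h (enumerate {n. Lm h \<sigma> n} k) \<tau> = (if \<forall>i<k. \<tau> i = \<sigma> i then 1 else 0)"
    unfolding e using seq_facts(2)[OF ih hl, of "pre \<sigma>"] by (simp add: Vs_pre)
  show "infinite {n. Lm h \<sigma> n}" unfolding e using seq_facts(1)[OF ih hl, of "pre \<sigma>"] by simp
qed

lemma M_seq:
  assumes ih: "inj h" and hl: "\<forall>s t. length s < length t \<longrightarrow> h s < h t"
  shows "fseq h (enumerate {n. Mm h \<sigma> n} k) \<tau> = (if \<tau> \<in> Vs (uu \<sigma> k) then 1 else 0)"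
    and "infinite {n. Mm h \<sigma> n}"
proof -
  have e: "{n. Mm h \<sigma> n} = {n. \<exists>k. n = h (uu \<sigma> k)}" by (simp add: Mm_def)
  show "fseq h (enumerate {n. Mm h \<sigma> n} k) \<tau> = (if \<tau> \<in> Vs (uu \<sigma> k) then 1 else 0)"
    unfolding e using seq_facts(2)[OF ih hl, of "uu \<sigma>"] by simp
  show "infinite {n. Mm h \<sigma> n}" unfolding e using seq_facts(1)[OF ih hl, of "uu \<sigma>"] by simp
qed

lemma L_conv:
  assumes ih: "inj h" and hl: "\<forall>s t. length s < length t \<longrightarrow> h s < h t"
  shows "convergent (\<lambda>k. fseq h (enumerate {n. Lm h \<sigma> n} k) \<tau>)"
    and "(\<lambda>k. fseq h (enumerate {n. Lm h \<sigma> n} k) \<tau>) \<longlonglongrightarrow> 0 \<longleftrightarrow> \<tau> \<noteq> \<sigma>"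
proof -
  let ?X = "\<lambda>k. fseq h (enumerate {n. Lm h \<sigma> n} k) \<tau>"
  have X: "?X = (\<lambda>k. if \<forall>i<k. \<tau> i = \<sigma> i then 1 else 0)" using L_seq(1)[OF ih hl] by simp
  have c: "?X \<longlonglongrightarrow> 0" if ne: "\<tau> \<noteq> \<sigma>"
  proof -
    obtain d where d: "\<tau> d \<noteq> \<sigma> d" using ne by blast
    show ?thesis unfolding X
    proof (rule tend0_diff[of \<tau> d \<sigma>, OF d])
      fix k assume "Suc d < k"
      then have "\<not> (\<forall>i<k. \<tau> i = \<sigma> i)" using d by (metis Suc_lessD)
      then show "(if \<forall>i<k. \<tau> i = \<sigma> i then 1 else 0) = (0::real)" by simp
    qed
  qed
  have c1: "?X \<longlonglongrightarrow> 1" if "\<tau> = \<sigma>" unfolding X using that by simp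
  show "convergent ?X"
    using c c1 unfolding convergent_def by blast
  show "?X \<longlonglongrightarrow> 0 \<longleftrightarrow> \<tau> \<noteq> \<sigma>"
    using c c1 LIMSEQ_unique by fastforce
qed

lemma M_conv:
  assumes ih: "inj h" and hl: "\<forall>s t. length s < length t \<longrightarrow> h s < h t"
  shows "convergent (\<lambda>k. fseq h (enumerate {n. Mm h \<sigma> n} k) \<tau>) \<longleftrightarrow> \<tau> \<noteq> \<sigma>"
proof -
  let ?X = "\<lambda>k. fseq h (enumerate {n. Mm h \<sigma> n} k) \<tau>"
  have X: "?X = (\<lambda>k. if \<tau> \<in> Vs (uu \<sigma> k) then 1 else 0)" using M_seq(1)[OF ih hl] by simp
  have c: "?X \<longlonglongrightarrow> 0" if ne: "\<tau> \<noteq> \<sigma>"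
  proof -
    obtain d where d: "\<tau> d \<noteq> \<sigma> d" using ne by blast
    show ?thesis unfolding X
    proof (rule tend0_diff[of \<tau> d \<sigma>, OF d])
      fix k assume k: "k > Suc d"
      then have "d < k - 1" "d < k" by auto
      then have "\<tau> \<notin> Vs (uu \<sigma> k)" unfolding Vs_uu using d by auto
      then show "(if \<tau> \<in> Vs (uu \<sigma> k) then 1 else 0) = (0::real)" by simp
    qed
  qed
  have nc: "\<not> convergent ?X" if e: "\<tau> = \<sigma>"
  proof
    assume "convergent ?X"
    then obtain l where l: "?X \<longlonglongrightarrow> l" unfolding convergent_def by blast
    have sm1: "strict_mono (\<lambda>k::nat. 2 * k)" by (simp add: strict_mono_def)
    have sm2: "strict_mono (\<lambda>k::nat. 2 * k + 1)" by (simp add: strict_mono_def)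
    have "(?X \<circ> (\<lambda>k. 2 * k)) = (\<lambda>k. 1)" unfolding X using e by (auto simp: Vs_uu comp_def)
    moreover have "(?X \<circ> (\<lambda>k. 2 * k + 1)) = (\<lambda>k. 0)" unfolding X using e by (auto simp: Vs_uu comp_def)
    ultimately have "(\<lambda>k. 1::real) \<longlonglongrightarrow> l" "(\<lambda>k. 0::real) \<longlonglongrightarrow> l"
      using LIMSEQ_subseq_LIMSEQ[OF l sm1] LIMSEQ_subseq_LIMSEQ[OF l sm2] by simp_all
    then have "(1::real) = l" "(0::real) = l" using LIMSEQ_unique tendsto_const by blast+
    then show False by simp
  qed
  show ?thesis using c nc unfolding convergent_def by blast
qed




lemma topspace_infsets: "topspace infsets_top = {L. infinite {n. L n}}"
  unfolding infsets_top_def cantor_top_def by simp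

lemma topspace_cantor: "topspace cantor_top = UNIV"
  unfolding cantor_top_def by simp

lemma topspace_baire: "topspace baire_top = UNIV"
  unfolding baire_top_def by simp

lemma memb:
  assumes ih: "inj h" and hl: "\<forall>s t. length s < length t \<longrightarrow> h s < h t"
  shows "Lm h \<sigma> \<in> Lf h A"
    and "Lm h \<sigma> \<in> Lf0 h A \<longleftrightarrow> \<sigma> \<notin> A"
    and "Mm h \<sigma> \<in> Lf h A \<longleftrightarrow> \<sigma> \<notin> A"
    and "Lm h \<sigma> \<in> topspace infsets_top"
    and "Mm h \<sigma> \<in> topspace infsets_top"
proof -
  show "Lm h \<sigma> \<in> Lf h A" unfolding Lf_def using L_seq(2)[OF ih hl] L_conv(1)[OF ih hl] by simp
  have "Lm h \<sigma> \<in> Lf0 h A \<longleftrightarrow> (\<forall>\<tau>\<in>A. \<tau> \<noteq> \<sigma>)"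
    unfolding Lf0_def using L_seq(2)[OF ih hl] L_conv(2)[OF ih hl] by simp
  then show "Lm h \<sigma> \<in> Lf0 h A \<longleftrightarrow> \<sigma> \<notin> A" by blast
  have "Mm h \<sigma> \<in> Lf h A \<longleftrightarrow> (\<forall>\<tau>\<in>A. \<tau> \<noteq> \<sigma>)"
    unfolding Lf_def using M_seq(2)[OF ih hl] M_conv[OF ih hl] by simp
  then show "Mm h \<sigma> \<in> Lf h A \<longleftrightarrow> \<sigma> \<notin> A" by blast
  show "Lm h \<sigma> \<in> topspace infsets_top" unfolding topspace_infsets using L_seq(2)[OF ih hl] by simp
  show "Mm h \<sigma> \<in> topspace infsets_top" unfolding topspace_infsets using M_seq(2)[OF ih hl] by simp
qed

lemma pre_dep: "(\<forall>i<k. \<sigma>' i = \<sigma> i) \<Longrightarrow> pre \<sigma>' k = pre \<sigma> k"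
  by (simp add: pre_def)

lemma uu_dep: "(\<forall>i<j. \<sigma>' i = \<sigma> i) \<Longrightarrow> uu \<sigma>' j = uu \<sigma> j"
proof (cases "even j")
  case True
  assume "\<forall>i<j. \<sigma>' i = \<sigma> i" then show ?thesis using True by (simp add: uu_def pre_dep)
next
  case False
  assume a: "\<forall>i<j. \<sigma>' i = \<sigma> i"
  from False have "j \<noteq> 0" by (metis even_zero)
  then have "\<sigma>' (j - 1) = \<sigma> (j - 1)" "\<forall>i<j - 1. \<sigma>' i = \<sigma> i" using a by auto
  then show ?thesis using False by (simp add: uu_def pre_dep)
qed

lemma Lm_dep:
  assumes hl: "\<forall>s t. length s < length t \<longrightarrow> h s < h t" and a: "\<forall>i<n. \<sigma>' i = \<sigma> i"
  shows "Lm h \<sigma>' n = Lm h \<sigma> n"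
proof -
  have "pre \<sigma>' k = pre \<sigma> k" if "k \<le> n" for k using a that by (intro pre_dep) auto
  moreover have "k \<le> n" if "n = h (pre s k)" for s k using h_ge_len[OF hl, of "pre s k"] that by simp
  ultimately show ?thesis unfolding Lm_def by metis
qed

lemma Mm_dep:
  assumes hl: "\<forall>s t. length s < length t \<longrightarrow> h s < h t" and a: "\<forall>i<n. \<sigma>' i = \<sigma> i"
  shows "Mm h \<sigma>' n = Mm h \<sigma> n"
proof -
  have "uu \<sigma>' k = uu \<sigma> k" if "k \<le> n" for k using a that by (intro uu_dep) auto
  moreover have "k \<le> n" if "n = h (uu s k)" for s k using h_ge_len[OF hl, of "uu s k"] that by simp
  ultimately show ?thesis unfolding Mm_def by metis
qed

lemma cont_inf:
  assumes "continuous_map Y cantor_top f" "\<And>y. y \<in> topspace Y \<Longrightarrow> infinite {n. f y n}"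
  shows "continuous_map Y infsets_top f"
  unfolding infsets_top_def continuous_map_in_subtopology
  using assms continuous_map_image_subset_topspace by blast

lemma Lm_cont:
  assumes ih: "inj h" and hl: "\<forall>s t. length s < length t \<longrightarrow> h s < h t"
  shows "continuous_map cantor_top infsets_top (Lm h)"
proof (rule cont_inf)
  show "continuous_map cantor_top cantor_top (Lm h)"
    unfolding cantor_top_def
  proof (rule loc_cont_prod)
    fix n show "loc (\<lambda>x. Lm h x n)" unfolding loc_def using Lm_dep[OF hl] by blast
  qed
  show "infinite {n. Lm h y n}" for y using L_seq(2)[OF ih hl] .
qed

lemma Mm_cont:
  assumes ih: "inj h" and hl: "\<forall>s t. length s < length t \<longrightarrow> h s < h t"
  shows "continuous_map cantor_top infsets_top (Mm h)"
proof (rule cont_inf)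
  show "continuous_map cantor_top cantor_top (Mm h)"
    unfolding cantor_top_def
  proof (rule loc_cont_prod)
    fix n show "loc (\<lambda>x. Mm h x n)" unfolding loc_def using Mm_dep[OF hl] by blast
  qed
  show "infinite {n. Mm h y n}" for y using M_seq(2)[OF ih hl] .
qed

lemma wbound:
  fixes S :: "'w::wellorder set"
  assumes segs: "\<forall>a::'w. countable {b. b < a}" and unc: "uncountable (UNIV::'w set)" and c: "countable S"
  shows "\<exists>\<beta>. \<forall>x\<in>S. x \<le> \<beta>"
proof -
  define T where "T = S \<union> (\<Union>x\<in>S. {b. b < x})"
  have "countable T" unfolding T_def using c segs by auto
  then have "T \<noteq> UNIV" using unc by auto
  then obtain \<beta> where "\<beta> \<notin> T" by blast
  then have "\<forall>x\<in>S. x \<le> \<beta>" unfolding T_def by (auto simp: not_less[symmetric])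
  then show ?thesis by blast
qed




lemma Hausdorff_infsets: "Hausdorff_space infsets_top"
  unfolding infsets_top_def cantor_top_def
  by (intro Hausdorff_space_subtopology) (simp add: Hausdorff_space_product_topology)

lemma pre_analytic:
  assumes S: "analytic_in (prod_topology infsets_top infsets_top) S"
    and p: "continuous_map (prod_topology cantor_top baire_top) (prod_topology infsets_top infsets_top) p"
  shows "analytic_in cantor_top {\<sigma>. \<exists>z. p (\<sigma>, z) \<in> S}"
proof (cases "S = {}")
  case True then show ?thesis by (simp add: analytic_in_def)
next
  case False
  then obtain g where g: "continuous_map baire_top (prod_topology infsets_top infsets_top) g" "range g = S"
    using S unfolding analytic_in_def by (elim conjE disjE exE) auto
  define ev where "ev w = (\<lambda>n. w (2 * n))" for w :: "nat \<Rightarrow> nat"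
  define od where "od w = (\<lambda>n. w (2 * n + 1))" for w :: "nat \<Rightarrow> nat"
  have cev: "continuous_map baire_top baire_top ev"
    unfolding baire_top_def ev_def by (intro loc_cont_prod) (simp add: loc_single')
  have cod: "continuous_map baire_top baire_top od"
    unfolding baire_top_def od_def by (intro loc_cont_prod) (simp add: loc_single')
  define q1 where "q1 = g \<circ> (od \<circ> (snd :: (nat \<Rightarrow> bool) \<times> (nat \<Rightarrow> nat) \<Rightarrow> nat \<Rightarrow> nat))"
  define q2 where "q2 = p \<circ> (\<lambda>x. (fst x, ev (snd x)))"
  have c1: "continuous_map (prod_topology cantor_top baire_top) (prod_topology infsets_top infsets_top) q1"
    unfolding q1_def by (rule continuous_map_compose[OF continuous_map_compose[OF continuous_map_snd cod] g(1)])
  have cpair: "continuous_map (prod_topology cantor_top baire_top) (prod_topology cantor_top baire_top) (\<lambda>x. (fst x, ev (snd x)))"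
    unfolding continuous_map_pairwise
  proof
    show "continuous_map (prod_topology cantor_top baire_top) cantor_top (fst \<circ> (\<lambda>x. (fst x, ev (snd x))))"
      by (simp add: o_def continuous_map_fst)
    have "continuous_map (prod_topology cantor_top baire_top) baire_top (ev \<circ> snd)"
      by (rule continuous_map_compose[OF continuous_map_snd cev])
    then show "continuous_map (prod_topology cantor_top baire_top) baire_top (snd \<circ> (\<lambda>x. (fst x, ev (snd x))))"
      by (simp add: o_def)
  qed
  have c2: "continuous_map (prod_topology cantor_top baire_top) (prod_topology infsets_top infsets_top) q2"
    unfolding q2_def by (rule continuous_map_compose[OF cpair p])
  have H: "Hausdorff_space (prod_topology infsets_top infsets_top)"
    using Hausdorff_infsets Hausdorff_space_prod_topology by blast
  define F where "F = {x \<in> topspace (prod_topology cantor_top baire_top). q1 x = q2 x}"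
  have clF: "closedin (prod_topology cantor_top baire_top) F"
    unfolding F_def by (rule closedin_continuous_maps_eq[OF H c1 c2])
  have "fst ` F = {\<sigma>. \<exists>z. p (\<sigma>, z) \<in> S}"
  proof
    show "fst ` F \<subseteq> {\<sigma>. \<exists>z. p (\<sigma>, z) \<in> S}"
    proof
      fix \<sigma> assume "\<sigma> \<in> fst ` F"
      then obtain w where "(\<sigma>, w) \<in> F" by force
      then have "g (od w) = p (\<sigma>, ev w)" unfolding F_def q1_def q2_def by simp
      then have "p (\<sigma>, ev w) \<in> S" using g(2) by (metis rangeI)
      then show "\<sigma> \<in> {\<sigma>. \<exists>z. p (\<sigma>, z) \<in> S}" by blast
    qed
    show "{\<sigma>. \<exists>z. p (\<sigma>, z) \<in> S} \<subseteq> fst ` F"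
    proof
      fix \<sigma> assume "\<sigma> \<in> {\<sigma>. \<exists>z. p (\<sigma>, z) \<in> S}"
      then obtain z where "p (\<sigma>, z) \<in> S" by blast
      then obtain z' where z': "g z' = p (\<sigma>, z)" using g(2) by (metis imageE)
      define w where "w n = (if even n then z (n div 2) else z' (n div 2))" for n
      have "ev w = z" "od w = z'" unfolding w_def ev_def od_def by auto
      then have "(\<sigma>, w) \<in> F" unfolding F_def q1_def q2_def using z'
        by (simp add: topspace_cantor topspace_baire)
      then show "\<sigma> \<in> fst ` F" by force
    qed
  qed
  then show ?thesis using proj_analytic[OF clF] by simp
qed




theorem mainTheorem18:
  fixes h :: "bool list \<Rightarrow> nat"
    and A :: "(nat \<Rightarrow> bool) set"
    and \<phi> \<psi> :: "(nat \<Rightarrow> bool) \<Rightarrow> 'w::wellorder"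
  assumes h_bij: "bij h"
    and h_len: "\<forall>s t. length s < length t \<longrightarrow> h s < h t"
    and w_segs: "\<forall>a::'w. countable {b. b < a}"
    and w_unc: "uncountable (UNIV :: 'w set)"
    and A_an: "analytic_in cantor_top A"
    and A_nb: "A \<notin> cantor_borel"
    and \<phi>_rank: "pi11_rank infsets_top (Lf h A) \<phi>"
    and \<psi>_rank: "pi11_rank infsets_top (Lf0 h A) \<psi>"
  shows "\<not> (\<exists>\<Phi> :: 'w \<Rightarrow> 'w. \<forall>L\<in>Lf0 h A. \<psi> L \<le> \<Phi> (\<phi> L))"
proof
  assume "\<exists>\<Phi> :: 'w \<Rightarrow> 'w. \<forall>L\<in>Lf0 h A. \<psi> L \<le> \<Phi> (\<phi> L)"
  then obtain \<Phi> :: "'w \<Rightarrow> 'w" where \<Phi>: "\<forall>L\<in>Lf0 h A. \<psi> L \<le> \<Phi> (\<phi> L)" by (elim exE)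
  have ih: "inj h" using h_bij by (rule bij_is_inj)
  note hl = h_len
  obtain RS1 RP1 where a1: "analytic_in (prod_topology infsets_top infsets_top) RS1"
    and r1: "\<forall>y\<in>Lf h A. \<forall>x\<in>topspace infsets_top.
            ((x \<in> Lf h A \<and> \<phi> x \<le> \<phi> y) \<longleftrightarrow> (x, y) \<in> RS1) \<and> ((x, y) \<in> RS1 \<longleftrightarrow> (x, y) \<in> RP1)"
    using \<phi>_rank unfolding pi11_rank_def by (elim exE conjE)
  obtain RS2 RP2 where a2: "analytic_in (prod_topology infsets_top infsets_top) RS2"
    and r2: "\<forall>y\<in>Lf0 h A. \<forall>x\<in>topspace infsets_top.
            ((x \<in> Lf0 h A \<and> \<psi> x \<le> \<psi> y) \<longleftrightarrow> (x, y) \<in> RS2) \<and> ((x, y) \<in> RS2 \<longleftrightarrow> (x, y) \<in> RP2)"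
    using \<psi>_rank unfolding pi11_rank_def by (elim exE conjE)
  have key: False if "analytic_in cantor_top (UNIV - A)"
    using suslin[OF A_an that] A_nb by simp
  have RS1_iff: "(x, y) \<in> RS1 \<longleftrightarrow> x \<in> Lf h A \<and> \<phi> x \<le> \<phi> y"
    if "y \<in> Lf h A" "x \<in> topspace infsets_top" for x y using r1 that by blast
  have RS2_iff: "(x, y) \<in> RS2 \<longleftrightarrow> x \<in> Lf0 h A \<and> \<psi> x \<le> \<psi> y"
    if "y \<in> Lf0 h A" "x \<in> topspace infsets_top" for x y using r2 that by blast
  have pfst: "continuous_map (prod_topology cantor_top baire_top) infsets_top (f \<circ> fst)"
    if "continuous_map cantor_top infsets_top f" for f
    by (rule continuous_map_compose[OF continuous_map_fst that])
  have psnd: "continuous_map (prod_topology cantor_top baire_top) infsets_top (f \<circ> snd)"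
    if "continuous_map baire_top infsets_top f" for f
    by (rule continuous_map_compose[OF continuous_map_snd that])
  have "\<exists>a. \<forall>\<tau>. \<phi> (Lm h \<tau>) \<le> a"
  proof (rule ccontr)
    assume "\<not> (\<exists>a. \<forall>\<tau>. \<phi> (Lm h \<tau>) \<le> a)"
    then have nb: "\<forall>a. \<exists>\<tau>. a \<le> \<phi> (Lm h \<tau>)" by (meson le_cases)
    define K where "K z = Lm h (\<lambda>i. z i \<noteq> (0::nat))" for z
    have Kc: "continuous_map baire_top infsets_top K"
    proof (rule cont_inf)
      show "continuous_map baire_top cantor_top K"
        unfolding baire_top_def cantor_top_def
      proof (rule loc_cont_prod)
        fix n show "loc (\<lambda>x. K x n)" unfolding loc_def K_def
        proof
          fix x :: "nat \<Rightarrow> nat"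
          show "\<exists>m. \<forall>y. (\<forall>i<m. y i = x i) \<longrightarrow> Lm h (\<lambda>i. y i \<noteq> 0) n = Lm h (\<lambda>i. x i \<noteq> 0) n"
            by (intro exI[of _ n] allI impI Lm_dep[OF hl]) simp
        qed
      qed
      show "infinite {n. K y n}" for y unfolding K_def using L_seq(2)[OF ih hl] .
    qed
    define p where "p x = (Mm h (fst x), K (snd x))" for x :: "(nat \<Rightarrow> bool) \<times> (nat \<Rightarrow> nat)"
    have pc: "continuous_map (prod_topology cantor_top baire_top) (prod_topology infsets_top infsets_top) p"
      unfolding continuous_map_pairwise
      using pfst[OF Mm_cont[OF ih hl]] psnd[OF Kc] by (simp add: p_def o_def)
    have "UNIV - A = {\<sigma>. \<exists>z. p (\<sigma>, z) \<in> RS1}"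
    proof
      show "UNIV - A \<subseteq> {\<sigma>. \<exists>z. p (\<sigma>, z) \<in> RS1}"
      proof
        fix \<sigma> assume "\<sigma> \<in> UNIV - A"
        then have M: "Mm h \<sigma> \<in> Lf h A" using memb(3)[OF ih hl] by simp
        obtain \<tau> where \<tau>: "\<phi> (Mm h \<sigma>) \<le> \<phi> (Lm h \<tau>)" using nb by blast
        define z where "z i = (if \<tau> i then 1 else (0::nat))" for i
        have "(\<lambda>i. z i \<noteq> 0) = \<tau>" unfolding z_def by auto
        then have "p (\<sigma>, z) = (Mm h \<sigma>, Lm h \<tau>)" by (simp add: p_def K_def)
        moreover have "(Mm h \<sigma>, Lm h \<tau>) \<in> RS1"
          using RS1_iff[OF memb(1)[OF ih hl] memb(5)[OF ih hl]] M \<tau> by blast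
        ultimately have "p (\<sigma>, z) \<in> RS1" by simp
        then show "\<sigma> \<in> {\<sigma>. \<exists>z. p (\<sigma>, z) \<in> RS1}" by blast
      qed
      show "{\<sigma>. \<exists>z. p (\<sigma>, z) \<in> RS1} \<subseteq> UNIV - A"
      proof
        fix \<sigma> assume "\<sigma> \<in> {\<sigma>. \<exists>z. p (\<sigma>, z) \<in> RS1}"
        then obtain z where "p (\<sigma>, z) \<in> RS1" by blast
        then have "(Mm h \<sigma>, K z) \<in> RS1" by (simp add: p_def)
        then have "Mm h \<sigma> \<in> Lf h A"
          using RS1_iff[OF _ memb(5)[OF ih hl]] memb(1)[OF ih hl] unfolding K_def by blast
        then show "\<sigma> \<in> UNIV - A" using memb(3)[OF ih hl] by simp
      qed
    qed
    then show False using key pre_analytic[OF a1 pc] by simp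
  qed
  then obtain a where a: "\<forall>\<tau>. \<phi> (Lm h \<tau>) \<le> a" by (elim exE)
  have ca: "countable (\<Phi> ` {b. b \<le> a})"
  proof -
    have "{b. b \<le> a} = insert a {b. b < a}" by auto
    then show ?thesis using w_segs by simp
  qed
  obtain \<beta> where \<beta>: "\<forall>x\<in>\<Phi> ` {b. b \<le> a}. x \<le> \<beta>" using wbound[OF w_segs w_unc ca] by (elim exE)
  have \<psi>b: "\<psi> (Lm h \<tau>) \<le> \<beta>" if "\<tau> \<notin> A" for \<tau>
  proof -
    have "Lm h \<tau> \<in> Lf0 h A" using memb(2)[OF ih hl] that by simp
    then have "\<psi> (Lm h \<tau>) \<le> \<Phi> (\<phi> (Lm h \<tau>))" using \<Phi> by blast
    also have "\<Phi> (\<phi> (Lm h \<tau>)) \<le> \<beta>" using \<beta> a by blast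
    finally show ?thesis .
  qed
  define V where "V = (\<lambda>\<tau>. \<psi> (Lm h \<tau>)) ` (UNIV - A)"
  have cV: "countable V"
  proof (rule countable_subset)
    show "V \<subseteq> insert \<beta> {b. b < \<beta>}" unfolding V_def using \<psi>b by (auto simp: le_less)
    show "countable (insert \<beta> {b. b < \<beta>})" using w_segs by simp
  qed
  have AU: "A \<noteq> UNIV"
  proof
    assume "A = UNIV" then show False using A_nb unfolding cantor_borel_def by (simp add: sigma_sets_top)
  qed
  define ch where "ch v = (SOME \<tau>. \<tau> \<notin> A \<and> \<psi> (Lm h \<tau>) = v)" for v
  have chp: "ch v \<notin> A \<and> \<psi> (Lm h (ch v)) = v" if "v \<in> V" for v
  proof -
    from that obtain \<tau> where "\<tau> \<notin> A" "\<psi> (Lm h \<tau>) = v" unfolding V_def by blast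
    then show ?thesis unfolding ch_def by (intro someI[where P="\<lambda>\<tau>. \<tau> \<notin> A \<and> \<psi> (Lm h \<tau>) = v"]) simp
  qed
  define D where "D = ch ` V"
  have cD: "countable D" unfolding D_def using cV by simp
  have neD: "D \<noteq> {}" unfolding D_def V_def using AU by auto
  define dn where "dn = from_nat_into D"
  have rdn: "range dn = D" unfolding dn_def using neD cD by simp
  have dnA: "dn k \<notin> A" for k
  proof -
    have "dn k \<in> D" using rdn by blast
    then obtain v where "v \<in> V" "dn k = ch v" unfolding D_def by (elim imageE)
    then show ?thesis using chp by simp
  qed
  define K2 where "K2 z = Lm h (dn (z 0))" for z :: "nat \<Rightarrow> nat"
  have K2c: "continuous_map baire_top infsets_top K2"
  proof (rule cont_inf)
    show "continuous_map baire_top cantor_top K2"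
      unfolding baire_top_def cantor_top_def
    proof (rule loc_cont_prod)
      fix n show "loc (\<lambda>x. K2 x n)" unfolding K2_def
        using loc_single[of "\<lambda>a. Lm h (dn a) n" 0] by simp
    qed
    show "infinite {n. K2 y n}" for y unfolding K2_def using L_seq(2)[OF ih hl] .
  qed
  define p2 where "p2 x = (Lm h (fst x), K2 (snd x))" for x :: "(nat \<Rightarrow> bool) \<times> (nat \<Rightarrow> nat)"
  have p2c: "continuous_map (prod_topology cantor_top baire_top) (prod_topology infsets_top infsets_top) p2"
    unfolding continuous_map_pairwise
    using pfst[OF Lm_cont[OF ih hl]] psnd[OF K2c] by (simp add: p2_def o_def)
  have "UNIV - A = {\<sigma>. \<exists>z. p2 (\<sigma>, z) \<in> RS2}"
  proof
    show "UNIV - A \<subseteq> {\<sigma>. \<exists>z. p2 (\<sigma>, z) \<in> RS2}"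
    proof
      fix \<sigma> assume s: "\<sigma> \<in> UNIV - A"
      define v where "v = \<psi> (Lm h \<sigma>)"
      have v: "v \<in> V" unfolding V_def v_def using s by blast
      then have "ch v \<in> range dn" unfolding rdn D_def by blast
      then obtain k where k0: "ch v = dn k" by (elim rangeE)
      then have k: "dn k = ch v" by simp
      have L0: "Lm h \<sigma> \<in> Lf0 h A" using memb(2)[OF ih hl] s by simp
      have Y: "Lm h (dn k) \<in> Lf0 h A" using memb(2)[OF ih hl] dnA by simp
      have "\<psi> (Lm h (dn k)) = v" using chp[OF v] k by simp
      then have "(Lm h \<sigma>, Lm h (dn k)) \<in> RS2"
        using RS2_iff[OF Y memb(4)[OF ih hl]] L0 unfolding v_def by simp
      moreover have "p2 (\<sigma>, \<lambda>_. k) = (Lm h \<sigma>, Lm h (dn k))" by (simp add: p2_def K2_def)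
      ultimately have "p2 (\<sigma>, \<lambda>_. k) \<in> RS2" by simp
      then show "\<sigma> \<in> {\<sigma>. \<exists>z. p2 (\<sigma>, z) \<in> RS2}" by blast
    qed
    show "{\<sigma>. \<exists>z. p2 (\<sigma>, z) \<in> RS2} \<subseteq> UNIV - A"
    proof
      fix \<sigma> assume "\<sigma> \<in> {\<sigma>. \<exists>z. p2 (\<sigma>, z) \<in> RS2}"
      then obtain z where "p2 (\<sigma>, z) \<in> RS2" by blast
      then have m: "(Lm h \<sigma>, Lm h (dn (z 0))) \<in> RS2" by (simp add: p2_def K2_def)
      have Y: "Lm h (dn (z 0)) \<in> Lf0 h A" using memb(2)[OF ih hl] dnA by simp
      have "Lm h \<sigma> \<in> Lf0 h A" using RS2_iff[OF Y memb(4)[OF ih hl]] m by simp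
      then show "\<sigma> \<in> UNIV - A" using memb(2)[OF ih hl] by simp
    qed
  qed
  then show False using key pre_analytic[OF a2 p2c] by simp
qed


end
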